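(* Let $P\subseteq\mathbb{C}$ be a finitely generated field extension of $\mathbb{Q}$ with $\sqrt{-1}\in P$, and let $q$ be a prime. If $a\in P$ is $q$-simple in $P$, then $a$ is $q$-simple in $P(\zeta)$, where $\zeta$ is a root of unity of order $q^t$, $t\ge1$.
   Context: $\mu$ is the group of all roots of unity in $\mathbb{C}^\times$. For a field $K\subseteq\mathbb{C}$ and integer $k>1$, a nonzero $a\in K$ is $k$-simple in $K$ if $a\notin\mu$ and for all $b\in K$, $\epsilon\in\mu$ and integers $d$, $a^d=b^k\epsilon$ implies $k\mid d$. *)

theory Defs
  imports Complex_Main "HOL-Computational_Algebra.Primes"
begin

definition is_subfield :: "complex set \<Rightarrow> bool" where
  "is_subfield K \<longleftrightarrow> 0 \<in> K \<and> 1 \<in> K \<and>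
     (\<forall>x\<in>K. \<forall>y\<in>K. x + y \<in> K \<and> x * y \<in> K) \<and>
     (\<forall>x\<in>K. - x \<in> K) \<and> (\<forall>x\<in>K. x \<noteq> 0 \<longrightarrow> inverse x \<in> K)"

definition gen_field :: "complex set \<Rightarrow> complex set" where
  "gen_field S = \<Inter>{K. is_subfield K \<and> S \<subseteq> K}"

definition adjoin :: "complex set \<Rightarrow> complex set \<Rightarrow> complex set" where
  "adjoin K S = gen_field (K \<union> S)"

definition fin_gen_over_Q :: "complex set \<Rightarrow> bool" where
  "fin_gen_over_Q K \<longleftrightarrow> (\<exists>S. finite S \<and> K = gen_field S)"

definition mu :: "complex set" where
  "mu = {z. \<exists>n::nat. n > 0 \<and> z ^ n = 1}"

definition root_of_unity_of_order :: "nat \<Rightarrow> complex \<Rightarrow> bool" where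
  "root_of_unity_of_order n z \<longleftrightarrow> n > 0 \<and> z ^ n = 1 \<and> (\<forall>m. 0 < m \<and> m < n \<longrightarrow> z ^ m \<noteq> 1)"

definition k_simple :: "complex set \<Rightarrow> nat \<Rightarrow> complex \<Rightarrow> bool" where
  "k_simple K k a \<longleftrightarrow> a \<in> K \<and> a \<noteq> 0 \<and> a \<notin> mu \<and>
     (\<forall>b\<in>K. \<forall>\<epsilon>\<in>mu. \<forall>d::int. a powi d = b ^ k * \<epsilon> \<longrightarrow> int k dvd d)"

end

theory Submission
  imports Defs "Jordan_Normal_Form.Determinant"
begin

lemma sf_0: "is_subfield K \<Longrightarrow> 0 \<in> K" by (simp add: is_subfield_def)
lemma sf_1: "is_subfield K \<Longrightarrow> 1 \<in> K" by (simp add: is_subfield_def)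
lemma sf_add: "is_subfield K \<Longrightarrow> x \<in> K \<Longrightarrow> y \<in> K \<Longrightarrow> x + y \<in> K" by (simp add: is_subfield_def)
lemma sf_mult: "is_subfield K \<Longrightarrow> x \<in> K \<Longrightarrow> y \<in> K \<Longrightarrow> x * y \<in> K" by (simp add: is_subfield_def)
lemma sf_uminus: "is_subfield K \<Longrightarrow> x \<in> K \<Longrightarrow> - x \<in> K" by (simp add: is_subfield_def)
lemma sf_inverse: "is_subfield K \<Longrightarrow> x \<in> K \<Longrightarrow> inverse x \<in> K"
  by (cases "x = 0") (auto simp add: is_subfield_def)
lemma sf_diff: "is_subfield K \<Longrightarrow> x \<in> K \<Longrightarrow> y \<in> K \<Longrightarrow> x - y \<in> K"
  using sf_add[of K x "-y"] sf_uminus[of K y] by simp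
lemma sf_divide: "is_subfield K \<Longrightarrow> x \<in> K \<Longrightarrow> y \<in> K \<Longrightarrow> x / y \<in> K"
  using sf_mult[of K x "inverse y"] sf_inverse[of K y] by (simp add: divide_inverse)
lemma sf_power: "is_subfield K \<Longrightarrow> x \<in> K \<Longrightarrow> x ^ n \<in> K"
  by (induction n) (auto intro: sf_1 sf_mult)
lemma sf_powi: "is_subfield K \<Longrightarrow> x \<in> K \<Longrightarrow> x powi n \<in> K"
  by (auto simp: power_int_def intro!: sf_power sf_inverse)
lemma sf_of_nat: "is_subfield K \<Longrightarrow> of_nat n \<in> K"
  by (induction n) (auto intro: sf_0 sf_1 sf_add)
lemma sf_of_int: "is_subfield K \<Longrightarrow> of_int n \<in> K"
proof (cases "n \<ge> 0")
  case True
  then have "of_int n = (of_nat (nat n) :: complex)" by simp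
  then show ?thesis if "is_subfield K" using sf_of_nat[OF that] by simp
next
  case False
  then have "of_int n = - (of_nat (nat (-n)) :: complex)" by simp
  then show ?thesis if "is_subfield K" using sf_uminus[OF that sf_of_nat[OF that]] by simp
qed
lemma sf_sum: "is_subfield K \<Longrightarrow> (\<And>i. i \<in> A \<Longrightarrow> f i \<in> K) \<Longrightarrow> sum f A \<in> K"
  by (induction A rule: infinite_finite_induct) (auto intro: sf_0 sf_add)
lemma sf_prod: "is_subfield K \<Longrightarrow> (\<And>i. i \<in> A \<Longrightarrow> f i \<in> K) \<Longrightarrow> prod f A \<in> K"
  by (induction A rule: infinite_finite_induct) (auto intro: sf_1 sf_mult)

lemma gen_field_subfield: "is_subfield (gen_field S)"
  unfolding gen_field_def is_subfield_def by auto
lemma gen_field_sup: "S \<subseteq> gen_field S"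
  unfolding gen_field_def by auto
lemma gen_field_least: "is_subfield K \<Longrightarrow> S \<subseteq> K \<Longrightarrow> gen_field S \<subseteq> K"
  unfolding gen_field_def by auto

lemma adjoin_subfield: "is_subfield (adjoin K S)"
  unfolding adjoin_def by (rule gen_field_subfield)
lemma adjoin_sup1: "K \<subseteq> adjoin K S"
  unfolding adjoin_def using gen_field_sup by blast
lemma adjoin_sup2: "S \<subseteq> adjoin K S"
  unfolding adjoin_def using gen_field_sup by blast
lemma adjoin_least: "is_subfield L \<Longrightarrow> K \<subseteq> L \<Longrightarrow> S \<subseteq> L \<Longrightarrow> adjoin K S \<subseteq> L"
  unfolding adjoin_def by (rule gen_field_least) auto

section \<open>Polynomials with coefficients in a subfield\<close>

definition Fpoly :: "complex set \<Rightarrow> complex poly \<Rightarrow> bool" where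
  "Fpoly K p \<longleftrightarrow> (\<forall>i. coeff p i \<in> K)"

context
  fixes K assumes sf: "is_subfield K"
begin

lemma Fpoly_0: "Fpoly K 0" by (simp add: Fpoly_def sf_0 sf)
lemma Fpoly_const: "c \<in> K \<Longrightarrow> Fpoly K [:c:]"
  by (auto simp: Fpoly_def coeff_pCons sf_0 sf split: nat.splits)
lemma Fpoly_pCons: "c \<in> K \<Longrightarrow> Fpoly K p \<Longrightarrow> Fpoly K (pCons c p)"
  by (auto simp: Fpoly_def coeff_pCons split: nat.splits)
lemma Fpoly_monom: "c \<in> K \<Longrightarrow> Fpoly K (monom c n)"
  by (auto simp: Fpoly_def sf_0 sf)
lemma Fpoly_add: "Fpoly K p \<Longrightarrow> Fpoly K q \<Longrightarrow> Fpoly K (p + q)"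
  by (auto simp: Fpoly_def intro: sf_add[OF sf])
lemma Fpoly_uminus: "Fpoly K p \<Longrightarrow> Fpoly K (- p)"
  by (auto simp: Fpoly_def intro: sf_uminus[OF sf])
lemma Fpoly_diff: "Fpoly K p \<Longrightarrow> Fpoly K q \<Longrightarrow> Fpoly K (p - q)"
  by (auto simp: Fpoly_def intro: sf_diff[OF sf])
lemma Fpoly_smult: "c \<in> K \<Longrightarrow> Fpoly K p \<Longrightarrow> Fpoly K (smult c p)"
  by (auto simp: Fpoly_def intro: sf_mult[OF sf])
lemma Fpoly_mult: "Fpoly K p \<Longrightarrow> Fpoly K q \<Longrightarrow> Fpoly K (p * q)"
  unfolding Fpoly_def coeff_mult by (auto intro!: sf_sum[OF sf] sf_mult[OF sf])
lemma Fpoly_sum: "(\<And>i. i \<in> A \<Longrightarrow> Fpoly K (f i)) \<Longrightarrow> Fpoly K (sum f A)"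
  unfolding Fpoly_def coeff_sum by (auto intro!: sf_sum[OF sf])
lemma Fpoly_power: "Fpoly K p \<Longrightarrow> Fpoly K (p ^ n)"
  by (induction n) (auto intro: Fpoly_mult Fpoly_const sf_1[OF sf] simp: one_pCons)
lemma Fpoly_lead: "Fpoly K p \<Longrightarrow> lead_coeff p \<in> K"
  by (simp add: Fpoly_def)

lemma Fpoly_divmod:
  assumes "Fpoly K g" "g \<noteq> 0" "Fpoly K p"
  shows "\<exists>s r. Fpoly K s \<and> Fpoly K r \<and> p = g * s + r \<and> (r = 0 \<or> degree r < degree g)"
  using assms(3)
proof (induction "degree p" arbitrary: p rule: less_induct)
  case less
  show ?case
  proof (cases "p = 0 \<or> degree p < degree g")
    case True
    then show ?thesis using less.prems by (intro exI[of _ 0] exI[of _ p]) (auto simp: Fpoly_0)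
  next
    case False
    then have p0: "p \<noteq> 0" and dg: "degree g \<le> degree p" by auto
    define c where "c = lead_coeff p / lead_coeff g"
    define k where "k = degree p - degree g"
    define p' where "p' = p - monom c k * g"
    have cK: "c \<in> K" unfolding c_def using assms less.prems by (intro sf_divide[OF sf] Fpoly_lead)
    have Fp': "Fpoly K p'" unfolding p'_def
      by (intro Fpoly_diff Fpoly_mult Fpoly_monom cK less.prems assms)
    have c0: "c \<noteq> 0" unfolding c_def using p0 assms by simp
    have dm: "degree (monom c k * g) = degree p"
      using c0 assms(2) dg by (simp add: degree_mult_eq degree_monom_eq k_def)
    have lc: "coeff (monom c k * g) (degree p) = lead_coeff p"
    proof -
      have "coeff (monom c k * g) (degree p) = c * coeff g (degree p - k)"
        by (simp add: coeff_monom_mult k_def dg)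
      also have "degree p - k = degree g" using dg k_def by simp
      finally show ?thesis using assms(2) by (simp add: c_def)
    qed
    show ?thesis
    proof (cases "p' = 0")
      case True
      then have "p = g * monom c k" unfolding p'_def by (simp add: mult.commute)
      then show ?thesis
        by (intro exI[of _ "monom c k"] exI[of _ 0]) (auto simp: Fpoly_0 Fpoly_monom cK)
    next
      case False
      have "degree p' < degree p"
      proof (rule degree_less_if_less_eqI)
        show "degree p' \<le> degree p" unfolding p'_def using dm by (intro degree_diff_le) auto
        show "coeff p' (degree p) = 0" unfolding p'_def using lc by simp
        show "p' \<noteq> 0" by fact
      qed
      from less.hyps[OF this Fp'] obtain s r where
        sr: "Fpoly K s" "Fpoly K r" "p' = g * s + r" "r = 0 \<or> degree r < degree g" by blast
      have "p = g * (s + monom c k) + r"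
        using sr(3) unfolding p'_def by (simp add: algebra_simps)
      then show ?thesis using sr
        by (intro exI[of _ "s + monom c k"] exI[of _ r]) (auto intro: Fpoly_add Fpoly_monom cK)
    qed
  qed
qed

lemma minpoly_exists:
  assumes "Fpoly K p" "p \<noteq> 0" "poly p \<alpha> = 0"
  shows "\<exists>g. Fpoly K g \<and> lead_coeff g = 1 \<and> poly g \<alpha> = 0 \<and>
    (\<forall>h. Fpoly K h \<and> h \<noteq> 0 \<and> poly h \<alpha> = 0 \<longrightarrow> degree g \<le> degree h)"
proof -
  define Q where "Q = (\<lambda>d. \<exists>h. Fpoly K h \<and> h \<noteq> 0 \<and> poly h \<alpha> = 0 \<and> degree h = d)"
  have "Q (degree p)" unfolding Q_def using assms by blast
  then have "Q (LEAST d. Q d)" by (rule LeastI)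
  then obtain h where h: "Fpoly K h" "h \<noteq> 0" "poly h \<alpha> = 0" "degree h = (LEAST d. Q d)"
    unfolding Q_def by blast
  have hmin: "degree h \<le> degree h'" if "Fpoly K h'" "h' \<noteq> 0" "poly h' \<alpha> = 0" for h'
    unfolding h(4) by (rule Least_le) (use that in \<open>auto simp: Q_def\<close>)
  define g where "g = smult (inverse (lead_coeff h)) h"
  have "Fpoly K g" unfolding g_def using h by (intro Fpoly_smult sf_inverse[OF sf] Fpoly_lead)
  moreover have "lead_coeff g = 1" unfolding g_def using h(2) by simp
  moreover have "poly g \<alpha> = 0" unfolding g_def using h(3) by simp
  moreover have "degree g = degree h" unfolding g_def using h(2) by simp
  ultimately show ?thesis using hmin by metis
qed

end

locale alg_ext =
  fixes K :: "complex set" and \<alpha> :: complex and g :: "complex poly"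
  assumes sf: "is_subfield K" and Fg: "Fpoly K g" and monic: "lead_coeff g = 1"
    and root: "poly g \<alpha> = 0"
    and minimal: "\<And>h. Fpoly K h \<Longrightarrow> h \<noteq> 0 \<Longrightarrow> poly h \<alpha> = 0 \<Longrightarrow> degree g \<le> degree h"
begin

definition R where "R = {poly p \<alpha> | p. Fpoly K p}"

lemma g0: "g \<noteq> 0" using monic by auto

lemma m_pos: "0 < degree g"
proof (rule ccontr)
  assume "\<not> 0 < degree g"
  then have "degree g = 0" by simp
  then have "g = [:lead_coeff g:]" by (metis degree_eq_zeroE coeff_pCons_0)
  then have "g = 1" using monic by (simp add: one_pCons)
  then show False using root by simp
qed

lemma RI: "Fpoly K p \<Longrightarrow> poly p \<alpha> \<in> R" unfolding R_def by blast
lemma RE: "x \<in> R \<Longrightarrow> (\<And>p. Fpoly K p \<Longrightarrow> x = poly p \<alpha> \<Longrightarrow> P) \<Longrightarrow> P"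
  unfolding R_def by blast

lemma R_K: "c \<in> K \<Longrightarrow> c \<in> R"
  using RI[OF Fpoly_const[OF sf]] by fastforce
lemma R_alpha: "\<alpha> \<in> R"
  using RI[OF Fpoly_pCons[OF sf sf_0[OF sf] Fpoly_const[OF sf sf_1[OF sf]]]] by simp
lemma R_add: "x \<in> R \<Longrightarrow> y \<in> R \<Longrightarrow> x + y \<in> R"
  by (metis RE RI Fpoly_add[OF sf] poly_add)
lemma R_mult: "x \<in> R \<Longrightarrow> y \<in> R \<Longrightarrow> x * y \<in> R"
  by (metis RE RI Fpoly_mult[OF sf] poly_mult)
lemma R_uminus: "x \<in> R \<Longrightarrow> - x \<in> R"
  by (metis RE RI Fpoly_uminus[OF sf] poly_minus)
lemma R_power: "x \<in> R \<Longrightarrow> x ^ n \<in> R"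
  by (induction n) (auto intro: R_mult R_K sf_1[OF sf])

lemma rep_ex: assumes "x \<in> R" shows "\<exists>r. Fpoly K r \<and> degree r < degree g \<and> poly r \<alpha> = x"
proof -
  obtain p where p: "Fpoly K p" "x = poly p \<alpha>" using assms by (rule RE)
  obtain s r where sr: "Fpoly K s" "Fpoly K r" "p = g * s + r" "r = 0 \<or> degree r < degree g"
    using Fpoly_divmod[OF sf Fg g0 p(1)] by blast
  have "poly r \<alpha> = x" using sr(3) p(2) root by simp
  moreover have "degree r < degree g" using sr(4) m_pos by auto
  ultimately show ?thesis using sr(2) by blast
qed

lemma rep_uniq:
  assumes "Fpoly K r1" "Fpoly K r2" "degree r1 < degree g" "degree r2 < degree g"
    "poly r1 \<alpha> = poly r2 \<alpha>"
  shows "r1 = r2"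
proof (rule ccontr)
  assume "r1 \<noteq> r2"
  then have "r1 - r2 \<noteq> 0" by simp
  from minimal[OF Fpoly_diff[OF sf assms(1,2)] this] assms(5)
  have "degree g \<le> degree (r1 - r2)" by simp
  moreover have "degree (r1 - r2) < degree g" using assms(3,4) by (rule degree_diff_less)
  ultimately show False by simp
qed

lemma R_inverse: assumes "x \<in> R" shows "inverse x \<in> R"
proof (cases "x = 0")
  case True then show ?thesis using R_K sf_0[OF sf] by simp
next
  case False
  obtain p where p: "Fpoly K p" "x = poly p \<alpha>" using assms by (rule RE)
  define I where "I = {u * p + v * g | u v. Fpoly K u \<and> Fpoly K v}"
  have p0: "p \<noteq> 0" using p False by auto
  have F1: "Fpoly K 1" using Fpoly_const[OF sf sf_1[OF sf]] by (simp add: one_pCons)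
  have pI: "p \<in> I" unfolding I_def
    by (intro CollectI exI[of _ 1] exI[of _ 0]) (simp add: F1 Fpoly_0[OF sf] p(1))
  define Q where "Q = (\<lambda>d. \<exists>h \<in> I. h \<noteq> 0 \<and> degree h = d)"
  have "Q (degree p)" unfolding Q_def using pI p0 by blast
  then have "Q (LEAST d. Q d)" by (rule LeastI)
  then obtain h where h: "h \<in> I" "h \<noteq> 0" "degree h = (LEAST d. Q d)" unfolding Q_def by blast
  have hmin: "degree h \<le> degree h'" if "h' \<in> I" "h' \<noteq> 0" for h'
    unfolding h(3) by (rule Least_le) (use that in \<open>auto simp: Q_def\<close>)
  obtain u v where uv: "Fpoly K u" "Fpoly K v" "h = u * p + v * g" using h(1) unfolding I_def by blast
  have Fh: "Fpoly K h" using uv by (auto intro: Fpoly_add[OF sf] Fpoly_mult[OF sf] p(1) Fg)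
  have dvd: "\<exists>s. Fpoly K s \<and> y = h * s" if yI: "y \<in> I" for y
  proof -
    obtain u' v' where uv': "Fpoly K u'" "Fpoly K v'" "y = u' * p + v' * g" using yI unfolding I_def by blast
    have Fy: "Fpoly K y" using uv' by (auto intro: Fpoly_add[OF sf] Fpoly_mult[OF sf] p(1) Fg)
    obtain s r where sr: "Fpoly K s" "Fpoly K r" "y = h * s + r" "r = 0 \<or> degree r < degree h"
      using Fpoly_divmod[OF sf Fh h(2) Fy] by blast
    have "r = (u' - u * s) * p + (v' - v * s) * g"
      using sr(3) uv(3) uv'(3) by (simp add: algebra_simps)
    then have "r \<in> I" unfolding I_def using uv uv' sr(1)
      by (blast intro: Fpoly_diff[OF sf] Fpoly_mult[OF sf])
    then have "r = 0" using sr(4) hmin by force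
    then show ?thesis using sr by auto
  qed
  have gI: "g \<in> I" unfolding I_def
    by (intro CollectI exI[of _ 0] exI[of _ 1]) (simp add: F1 Fpoly_0[OF sf])
  obtain sg where sg: "Fpoly K sg" "g = h * sg" using dvd[OF gI] by blast
  obtain sp where sp: "Fpoly K sp" "p = h * sp" using dvd[OF pI] by blast
  have "poly h \<alpha> * poly sg \<alpha> = 0" using root sg(2) by (metis poly_mult)
  moreover have "poly h \<alpha> \<noteq> 0"
  proof
    assume "poly h \<alpha> = 0"
    then have "poly p \<alpha> = 0" using sp(2) by simp
    then show False using p False by simp
  qed
  ultimately have "poly sg \<alpha> = 0" by simp
  moreover have sg0: "sg \<noteq> 0" using sg(2) g0 by auto
  ultimately have "degree g \<le> degree sg" using minimal sg(1) by blast
  moreover have "degree g = degree h + degree sg" using sg(2) h(2) sg0 by (simp add: degree_mult_eq)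
  ultimately have "degree h = 0" by simp
  then obtain c where c: "h = [:c:]" by (metis degree_eq_zeroE)
  have c0: "c \<noteq> 0" using h(2) c by simp
  have cK: "c \<in> K" using Fh c unfolding Fpoly_def by (metis coeff_pCons_0)
  have "c = poly h \<alpha>" using c by simp
  also have "\<dots> = poly u \<alpha> * x" using uv(3) p(2) root by simp
  finally have "c = poly u \<alpha> * x" .
  then have "inverse x = poly (smult (inverse c) u) \<alpha>" using False c0 by (simp add: field_simps)
  then show ?thesis using RI[OF Fpoly_smult[OF sf sf_inverse[OF sf cK] uv(1)]] by metis
qed

lemma R_subfield: "is_subfield R"
  unfolding is_subfield_def
  by (intro conjI ballI impI R_K[OF sf_0[OF sf]] R_K[OF sf_1[OF sf]] R_add R_mult R_uminus R_inverse)

lemma K_sub_R: "K \<subseteq> R" using R_K by blast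

definition rep where "rep x = (THE r. Fpoly K r \<and> degree r < degree g \<and> poly r \<alpha> = x)"

lemma rep: assumes "x \<in> R" shows "Fpoly K (rep x)" "degree (rep x) < degree g" "poly (rep x) \<alpha> = x"
proof -
  obtain r where r: "Fpoly K r" "degree r < degree g" "poly r \<alpha> = x" using rep_ex[OF assms] by blast
  have "\<exists>!r. Fpoly K r \<and> degree r < degree g \<and> poly r \<alpha> = x"
  proof (rule ex1I[of _ r])
    show "Fpoly K r \<and> degree r < degree g \<and> poly r \<alpha> = x" using r by simp
    fix y assume "Fpoly K y \<and> degree y < degree g \<and> poly y \<alpha> = x"
    then show "y = r" using rep_uniq[of y r] r by simp
  qed
  from theI'[OF this] show "Fpoly K (rep x)" "degree (rep x) < degree g" "poly (rep x) \<alpha> = x"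
    unfolding rep_def by auto
qed

lemma rep_eq: assumes "Fpoly K r" "degree r < degree g" shows "rep (poly r \<alpha>) = r"
proof -
  note h = rep[OF RI[OF assms(1)]]
  show ?thesis using rep_uniq[OF h(1) assms(1) h(2) assms(2)] h(3) by simp
qed

lemma poly_lt: assumes "degree r < degree g" shows "poly r \<alpha> = (\<Sum>i<degree g. coeff r i * \<alpha> ^ i)"
proof -
  have "poly r \<alpha> = (\<Sum>i\<le>degree r. coeff r i * \<alpha> ^ i)" by (rule poly_altdef)
  also have "\<dots> = (\<Sum>i<degree g. coeff r i * \<alpha> ^ i)"
    by (rule sum.mono_neutral_left) (use assms in \<open>auto simp: coeff_eq_0\<close>)
  finally show ?thesis .
qed

definition Mx where "Mx x = mat (degree g) (degree g) (\<lambda>(i,j). coeff (rep (x * \<alpha> ^ j)) i)"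
definition N where "N x = det (Mx x)"

lemma Mx_carrier: "Mx x \<in> carrier_mat (degree g) (degree g)" unfolding Mx_def by simp

lemma rep_mult:
  assumes x: "x \<in> R" and y: "y \<in> R"
  shows "rep (x * y) = (\<Sum>k<degree g. smult (coeff (rep y) k) (rep (x * \<alpha> ^ k)))"
proof -
  have xa: "x * \<alpha> ^ k \<in> R" for k using x by (intro R_mult R_power R_alpha)
  let ?S = "(\<Sum>k<degree g. smult (coeff (rep y) k) (rep (x * \<alpha> ^ k)))"
  have F: "Fpoly K ?S"
    by (intro Fpoly_sum[OF sf] Fpoly_smult[OF sf]) (use rep[OF y] rep[OF xa] in \<open>auto simp: Fpoly_def\<close>)
  have D: "degree ?S < degree g"
    by (intro degree_sum_less m_pos) (metis degree_smult_le le_less_trans rep(2)[OF xa])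
  have "poly ?S \<alpha> = (\<Sum>k<degree g. coeff (rep y) k * (x * \<alpha> ^ k))"
    by (simp add: poly_sum rep(3)[OF xa])
  also have "\<dots> = x * (\<Sum>k<degree g. coeff (rep y) k * \<alpha> ^ k)"
    by (simp add: sum_distrib_left algebra_simps)
  also have "\<dots> = x * y" using poly_lt[OF rep(2)[OF y]] rep(3)[OF y] by simp
  finally show ?thesis using rep_eq[OF F D] by simp
qed

lemma Mx_mult:
  assumes x: "x \<in> R" and y: "y \<in> R"
  shows "Mx (x * y) = Mx x * Mx y"
proof (rule eq_matI)
  fix i j assume ij: "i < dim_row (Mx x * Mx y)" "j < dim_col (Mx x * Mx y)"
  then have i: "i < degree g" and j: "j < degree g" by (auto simp: Mx_def)
  have ya: "y * \<alpha> ^ j \<in> R" using y by (intro R_mult R_power R_alpha)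
  have "Mx (x * y) $$ (i, j) = coeff (rep (x * (y * \<alpha> ^ j))) i"
    using i j by (simp add: Mx_def mult.assoc)
  also have "\<dots> = (\<Sum>k<degree g. coeff (rep (y * \<alpha> ^ j)) k * coeff (rep (x * \<alpha> ^ k)) i)"
    by (simp add: rep_mult[OF x ya] coeff_sum)
  also have "\<dots> = (Mx x * Mx y) $$ (i, j)"
    using i j by (auto simp: Mx_def scalar_prod_def mult.commute lessThan_atLeast0 intro!: sum.cong)
  finally show "Mx (x * y) $$ (i, j) = (Mx x * Mx y) $$ (i, j)" .
qed (auto simp: Mx_def)

lemma N_mult: "x \<in> R \<Longrightarrow> y \<in> R \<Longrightarrow> N (x * y) = N x * N y"
  unfolding N_def by (simp add: Mx_mult det_mult[OF Mx_carrier Mx_carrier])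

lemma N_K: assumes x: "x \<in> R" shows "N x \<in> K"
proof -
  have s: "signof p \<in> K" for p :: "nat \<Rightarrow> nat"
    by (auto simp: sign_def intro: sf_1[OF sf] sf_uminus[OF sf])
  have e: "Mx x $$ (i, j) \<in> K" if "i < degree g" "j < degree g" for i j
  proof -
    have "Mx x $$ (i, j) = coeff (rep (x * \<alpha> ^ j)) i" using that by (simp add: Mx_def)
    moreover have "x * \<alpha> ^ j \<in> R" using x by (intro R_mult R_power R_alpha)
    ultimately show ?thesis using rep(1) unfolding Fpoly_def by metis
  qed
  have "N x = (\<Sum>p \<in> {p. p permutes {0..<degree g}}. signof p * (\<Prod>i = 0..<degree g. Mx x $$ (i, p i)))"
    unfolding N_def by (rule det_def'[OF Mx_carrier])
  also have "\<dots> \<in> K"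
  proof (intro sf_sum[OF sf] sf_mult[OF sf] s sf_prod[OF sf] e)
    fix p i assume "p \<in> {p. p permutes {0..<degree g}}" "i \<in> {0..<degree g}"
    then show "i < degree g" "p i < degree g" by (auto simp: permutes_in_image)
  qed
  finally show ?thesis .
qed

lemma N_const: assumes c: "c \<in> K" shows "N c = c ^ degree g"
proof -
  have r: "rep (c * \<alpha> ^ j) = monom c j" if "j < degree g" for j
  proof -
    have "rep (poly (monom c j) \<alpha>) = monom c j"
      by (rule rep_eq) (use that degree_monom_le[of c j] Fpoly_monom[OF sf c] in auto)
    then show ?thesis by (simp add: poly_monom)
  qed
  have "Mx c = c \<cdot>\<^sub>m 1\<^sub>m (degree g)"
    by (rule eq_matI) (auto simp: Mx_def r coeff_monom)
  then show ?thesis unfolding N_def by simp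
qed

lemma N_power: "x \<in> R \<Longrightarrow> N (x ^ n) = N x ^ n"
proof (induction n)
  case 0 then show ?case using N_const[OF sf_1[OF sf]] by simp
next
  case (Suc n) then show ?case using N_mult[OF Suc.prems R_power[OF Suc.prems]] by simp
qed

end

section \<open>Roots of unity\<close>

lemma mu_I: "n > 0 \<Longrightarrow> z ^ n = 1 \<Longrightarrow> z \<in> mu" unfolding mu_def by blast
lemma mu_E: "z \<in> mu \<Longrightarrow> (\<And>n. n > 0 \<Longrightarrow> z ^ n = 1 \<Longrightarrow> P) \<Longrightarrow> P" unfolding mu_def by blast
lemma mu_nz: "z \<in> mu \<Longrightarrow> z \<noteq> 0" by (auto elim!: mu_E simp: power_0_left split: if_splits)
lemma mu_1: "1 \<in> mu" by (rule mu_I[of 1]) auto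
lemma mu_mult: assumes "x \<in> mu" "y \<in> mu" shows "x * y \<in> mu"
proof -
  obtain n where n: "n > 0" "x ^ n = 1" using assms(1) by (rule mu_E)
  obtain k where k: "k > 0" "y ^ k = 1" using assms(2) by (rule mu_E)
  have "(x * y) ^ (n * k) = x ^ (n * k) * y ^ (k * n)"
    by (simp add: power_mult_distrib mult.commute[of n k])
  also have "\<dots> = (x ^ n) ^ k * (y ^ k) ^ n" by (simp only: power_mult)
  finally have "(x * y) ^ (n * k) = (x ^ n) ^ k * (y ^ k) ^ n" .
  then show ?thesis using n k by (intro mu_I[of "n * k"]) auto
qed
lemma mu_inverse: assumes "x \<in> mu" shows "inverse x \<in> mu"
proof -
  obtain n where n: "n > 0" "x ^ n = 1" using assms by (rule mu_E)
  then show ?thesis by (intro mu_I[of n]) (auto simp: power_inverse)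
qed
lemma mu_power: "x \<in> mu \<Longrightarrow> x ^ k \<in> mu"
  by (induction k) (auto intro: mu_1 mu_mult)
lemma mu_powi: "x \<in> mu \<Longrightarrow> x powi k \<in> mu"
  by (auto simp: power_int_def intro: mu_power mu_inverse)

lemma prim_pow_eq1:
  fixes w :: complex
  assumes q: "prime q" and w: "w ^ q = 1" "w \<noteq> 1"
  shows "w ^ k = 1 \<longleftrightarrow> q dvd k"
proof
  assume k: "w ^ k = 1"
  show "q dvd k"
  proof (rule ccontr)
    assume nd: "\<not> q dvd k"
    then have "k \<noteq> 0" by (metis dvd_0_right)
    have "coprime k q" using prime_imp_coprime[OF q nd] by (simp add: coprime_commute)
    then have "gcd k q = 1" by simp
    then obtain x y where xy: "k * x = q * y + 1" using bezout_nat[OF \<open>k \<noteq> 0\<close>, of q] by auto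
    have "w ^ (k * x) = 1" using k by (simp add: power_mult)
    moreover have "w ^ (k * x) = w" unfolding xy by (simp add: power_mult w(1))
    ultimately show False using w(2) by simp
  qed
next
  assume "q dvd k" then obtain j where "k = q * j" by blast
  then show "w ^ k = 1" by (simp add: power_mult w(1))
qed

lemma roots_all:
  fixes w z :: complex
  assumes q: "prime q" and w: "w ^ q = 1" "w \<noteq> 1" and z: "z ^ q = 1"
  shows "\<exists>s<q. z = w ^ s"
proof (rule ccontr)
  assume nz: "\<not> (\<exists>s<q. z = w ^ s)"
  have q0: "q > 0" using q prime_gt_0_nat by blast
  have w0: "w \<noteq> 0" using w(1) q0 by (cases "w = 0") (auto simp: power_0_left)
  define S where "S = (\<lambda>s. w ^ s) ` {..<q}"
  have inj: "inj_on (\<lambda>s. w ^ s) {..<q}"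
  proof (rule inj_onI)
    fix s s' assume ss: "s \<in> {..<q}" "s' \<in> {..<q}" "w ^ s = w ^ s'"
    show "s = s'"
    proof (rule ccontr)
      assume "s \<noteq> s'"
      then consider "s < s'" | "s' < s" by linarith
      then show False
      proof cases
        case 1
        then have "w ^ s' = w ^ s * w ^ (s' - s)" by (simp add: power_add[symmetric])
        then have "w ^ (s' - s) = 1" using ss(3) w0 by simp
        then have "q dvd (s' - s)" using prim_pow_eq1[OF q w] by simp
        then show False using 1 ss by (auto dest: dvd_imp_le)
      next
        case 2
        then have "w ^ s = w ^ s' * w ^ (s - s')" by (simp add: power_add[symmetric])
        then have "w ^ (s - s') = 1" using ss(3) w0 by simp
        then have "q dvd (s - s')" using prim_pow_eq1[OF q w] by simp
        then show False using 2 ss by (auto dest: dvd_imp_le)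
      qed
    qed
  qed
  have cS: "card S = q" unfolding S_def using card_image[OF inj] by simp
  define p :: "complex poly" where "p = monom 1 q - 1"
  have dp: "degree p = q"
  proof -
    have "degree (monom (1::complex) q + - 1) = degree (monom (1::complex) q)"
      by (rule degree_add_eq_left) (use q0 in \<open>simp add: degree_monom_eq\<close>)
    then show ?thesis unfolding p_def by (simp add: degree_monom_eq)
  qed
  have p0: "p \<noteq> 0" using dp q0 by auto
  have pz: "poly p x = x ^ q - 1" for x unfolding p_def by (simp add: poly_monom)
  have "(w ^ s) ^ q = 1" for s
  proof -
    have "(w ^ s) ^ q = (w ^ q) ^ s" by (simp only: power_mult[symmetric] mult.commute)
    then show ?thesis using w(1) by simp
  qed
  then have "insert z S \<subseteq> {x. poly p x = 0}"
    using z unfolding S_def pz by auto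
  then have "card (insert z S) \<le> card {x. poly p x = 0}"
    by (rule card_mono[OF poly_roots_finite[OF p0]])
  also have "\<dots> \<le> q" using card_poly_roots_bound[OF p0] dp by simp
  finally have "card (insert z S) \<le> q" .
  moreover have "z \<notin> S" using nz unfolding S_def by auto
  moreover have "finite S" unfolding S_def by simp
  ultimately show False using cS by simp
qed

section \<open>Simplicity\<close>

lemma simple_no_root:
  assumes "k_simple K q a" "prime q" "c \<in> K" "\<eta> \<in> mu"
  shows "a \<noteq> c ^ q * \<eta>"
proof
  assume "a = c ^ q * \<eta>"
  then have "a powi 1 = c ^ q * \<eta>" by simp
  then have "int q dvd 1" using assms(1,3,4) unfolding k_simple_def by blast
  then show False using assms(2) by (simp add: prime_gt_1_nat)
qed

lemma simple_mono: "k_simple L q a \<Longrightarrow> L' \<subseteq> L \<Longrightarrow> a \<in> L' \<Longrightarrow> k_simple L' q a"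
  unfolding k_simple_def by blast

lemma simple_intro:
  assumes sf: "is_subfield L" and a: "a \<in> L" "a \<noteq> 0" "a \<notin> mu" and q: "prime q"
    and H: "\<And>c \<eta>. c \<in> L \<Longrightarrow> \<eta> \<in> mu \<Longrightarrow> a \<noteq> c ^ q * \<eta>"
  shows "k_simple L q a"
  unfolding k_simple_def
proof (intro conjI a ballI allI impI)
  fix b \<epsilon> d assume b: "b \<in> L" and e: "\<epsilon> \<in> mu" and eq: "a powi d = b ^ q * \<epsilon>"
  show "int q dvd d"
  proof (rule ccontr)
    assume nd: "\<not> int q dvd d"
    have qi: "prime (int q)" using q by (simp add: prime_nat_int_transfer)
    have "coprime (int q) d" using nd qi by (simp add: prime_imp_coprime)
    then have "gcd d (int q) = 1" by (simp add: coprime_commute)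
    then obtain u v where uv: "u * d + v * int q = 1" using bezout_int[of d "int q"] by auto
    have "a = a powi (u * d + v * int q)" using uv by simp
    also have "\<dots> = a powi (d * u) * a powi (v * int q)"
      using a(2) by (simp add: power_int_add mult.commute[of u d])
    also have "a powi (d * u) = (a powi d) powi u" by (rule power_int_mult)
    also have "a powi (v * int q) = (a powi v) ^ q" by (simp add: power_int_mult power_int_of_nat)
    also have "(a powi d) powi u = (b powi u) ^ q * \<epsilon> powi u"
    proof -
      have "(b ^ q) powi u = b powi (int q * u)" by (simp add: power_int_mult power_int_of_nat)
      also have "\<dots> = (b powi u) ^ q" by (simp add: power_int_mult power_int_of_nat mult.commute[of "int q" u])
      finally show ?thesis unfolding eq by (simp add: power_int_mult_distrib)
    qed
    also have "(b powi u) ^ q * \<epsilon> powi u * (a powi v) ^ q = (b powi u * a powi v) ^ q * \<epsilon> powi u"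
      by (simp add: power_mult_distrib)
    finally have "a = (b powi u * a powi v) ^ q * \<epsilon> powi u" .
    moreover have "b powi u * a powi v \<in> L" using sf b a by (intro sf_mult sf_powi)
    moreover have "\<epsilon> powi u \<in> mu" using e by (rule mu_powi)
    ultimately show False using H by blast
  qed
qed

section \<open>Adjoining an algebraic element\<close>

lemma alg_ext_exists:
  assumes "is_subfield K" "Fpoly K p" "p \<noteq> 0" "poly p \<alpha> = 0"
  shows "\<exists>g. alg_ext K \<alpha> g \<and> degree g \<le> degree p"
proof -
  obtain g where g: "Fpoly K g" "lead_coeff g = 1" "poly g \<alpha> = 0"
    "\<And>h. Fpoly K h \<and> h \<noteq> 0 \<and> poly h \<alpha> = 0 \<Longrightarrow> degree g \<le> degree h"
    using minpoly_exists[OF assms] by blast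
  have "alg_ext K \<alpha> g" by unfold_locales (use assms(1) g in auto)
  then show ?thesis using g(4) assms by blast
qed

lemma (in alg_ext) adjoin_sub_R: "adjoin K {\<alpha>} \<subseteq> R"
  by (rule adjoin_least[OF R_subfield K_sub_R]) (use R_alpha in auto)

lemma caseA:
  assumes sf: "is_subfield F" and q: "prime q" and sa: "k_simple F q a" and w: "w ^ q = 1"
  shows "k_simple (adjoin F {w}) q a"
proof -
  have q2: "q \<ge> 2" using q by (rule prime_ge_2_nat)
  obtain p where p: "Fpoly F p" "p \<noteq> 0" "poly p w = 0" "degree p < q"
  proof (cases "w = 1")
    case True
    show ?thesis
    proof (rule that[of "[:-1, 1:]"])
      show "Fpoly F [:-1, 1:]"
        by (intro Fpoly_pCons[OF sf] Fpoly_const[OF sf] sf_uminus[OF sf] sf_1[OF sf])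
    qed (use True q2 in auto)
  next
    case False
    define p :: "complex poly" where "p = (\<Sum>k<q. monom 1 k)"
    show ?thesis
    proof (rule that[of p])
      show "Fpoly F p" unfolding p_def by (intro Fpoly_sum[OF sf] Fpoly_monom[OF sf] sf_1[OF sf])
      have "poly p w = (\<Sum>k<q. w ^ k)" unfolding p_def by (simp add: poly_sum poly_monom)
      also have "\<dots> = 0" using False w by (simp add: geometric_sum)
      finally show "poly p w = 0" .
      have "coeff p 0 = 1" unfolding p_def using q2 by (simp add: coeff_sum lessThan_Suc_eq_insert_0 sum.reindex)
      then show "p \<noteq> 0" by auto
      have "degree p \<le> q - 1" unfolding p_def
        by (rule degree_sum_le) (auto intro: order.trans[OF degree_monom_le])
      then show "degree p < q" using q2 by simp
    qed
  qed
  obtain g where g: "alg_ext F w g" "degree g \<le> degree p"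
    using alg_ext_exists[OF sf p(1-3)] by blast
  interpret alg_ext F w g by (rule g(1))
  have mq: "0 < degree g" "degree g < q" using m_pos g(2) p(4) by auto
  have aF: "a \<in> F" "a \<noteq> 0" "a \<notin> mu" using sa unfolding k_simple_def by auto
  show ?thesis
  proof (rule simple_intro[OF adjoin_subfield _ aF(2,3) q])
    show "a \<in> adjoin F {w}" using aF(1) adjoin_sup1 by blast
    fix c \<eta> assume c: "c \<in> adjoin F {w}" and e: "\<eta> \<in> mu"
    show "a \<noteq> c ^ q * \<eta>"
    proof
      assume eq: "a = c ^ q * \<eta>"
      have cR: "c \<in> R" using c adjoin_sub_R by blast
      have c0: "c \<noteq> 0" using eq aF(2) q2 by auto
      have "\<eta> = a / c ^ q" using eq c0 by simp
      then have eR: "\<eta> \<in> R" using R_subfield aF(1) K_sub_R cR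
        by (metis sf_divide R_power subsetD)
      obtain n where n: "n > 0" "\<eta> ^ n = 1" using e by (rule mu_E)
      have "N \<eta> ^ n = 1" using N_power[OF eR, of n] n(2) N_const[OF sf_1[OF sf]] by simp
      then have Ne: "N \<eta> \<in> mu" using mu_I[OF n(1)] by blast
      have "a ^ degree g = N a" using N_const[OF aF(1)] by simp
      also have "\<dots> = N c ^ q * N \<eta>" using eq N_mult[OF R_power[OF cR] eR] N_power[OF cR] by simp
      finally have "a powi int (degree g) = N c ^ q * N \<eta>" by (simp add: power_int_of_nat)
      then have "int q dvd int (degree g)" using sa N_K[OF cR] Ne unfolding k_simple_def by blast
      then have "q dvd degree g" by simp
      then show False using mq by (auto dest: dvd_imp_le)
    qed
  qed
qed

lemma pow_swap: "((x::complex) ^ a) ^ b = (x ^ b) ^ a"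
  by (metis power_mult mult.commute)

lemma deg_Xq: "q > 0 \<Longrightarrow> degree (monom (1::complex) q - [:c:]) = q"
proof -
  assume q0: "q > 0"
  have "degree (monom (1::complex) q + [:-c:]) = degree (monom (1::complex) q)"
    by (rule degree_add_eq_left) (use q0 in \<open>simp add: degree_monom_eq\<close>)
  moreover have "monom (1::complex) q - [:c:] = monom 1 q + [:-c:]" by (simp add: poly_eq_iff coeff_pCons split: nat.split)
  ultimately show ?thesis by (metis degree_monom_eq one_neq_zero)
qed

lemma poly_lt_gen: "degree (r::complex poly) < n \<Longrightarrow> poly r z = (\<Sum>i<n. coeff r i * z ^ i)"
proof -
  assume d: "degree r < n"
  have "poly r z = (\<Sum>i\<le>degree r. coeff r i * z ^ i)" by (rule poly_altdef)
  also have "\<dots> = (\<Sum>i<n. coeff r i * z ^ i)"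
    by (rule sum.mono_neutral_left) (use d in \<open>auto simp: coeff_eq_0\<close>)
  finally show ?thesis .
qed

lemma Fpoly_pcompose:
  assumes sf: "is_subfield K" and p: "Fpoly K p" and r: "Fpoly K r"
  shows "Fpoly K (pcompose p r)"
  using p
proof (induction p rule: pCons_induct)
  case 0 then show ?case by (simp add: Fpoly_0[OF sf])
next
  case (pCons a p)
  have a: "a \<in> K" using pCons.prems unfolding Fpoly_def by (metis coeff_pCons_0)
  have "Fpoly K p" using pCons.prems unfolding Fpoly_def by (metis coeff_pCons_Suc)
  then have "Fpoly K (pcompose p r)" by (rule pCons.IH)
  then show ?case by (simp add: pcompose_pCons Fpoly_add[OF sf] Fpoly_const[OF sf a] Fpoly_mult[OF sf r])
qed

lemma kummer_setup:
  assumes sf: "is_subfield F" and q: "prime q" and wF: "w \<in> F" and wq: "w ^ q = 1" and w1: "w \<noteq> 1"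
    and om: "\<omega> \<in> mu" and thF: "\<omega> ^ q \<in> F" and nF: "\<omega> \<notin> F"
  shows "alg_ext F \<omega> (monom 1 q - [:\<omega> ^ q:])"
proof -
  have q0: "q > 0" using q prime_gt_0_nat by blast
  define p where "p = monom (1::complex) q - [:\<omega> ^ q:]"
  have Fp: "Fpoly F p" unfolding p_def
    by (intro Fpoly_diff[OF sf] Fpoly_monom[OF sf] Fpoly_const[OF sf] sf_1[OF sf] thF)
  have dp: "degree p = q" unfolding p_def using deg_Xq[OF q0] .
  have p0: "p \<noteq> 0" using dp q0 by auto
  have pr: "poly p \<omega> = 0" unfolding p_def by (simp add: poly_monom)
  obtain g where g: "alg_ext F \<omega> g" "degree g \<le> degree p"
    using alg_ext_exists[OF sf Fp p0 pr] by blast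
  interpret alg_ext F \<omega> g by (rule g(1))
  have o0: "\<omega> \<noteq> 0" using om by (rule mu_nz)
  have w0: "w \<noteq> 0" using wq q0 by (cases "w = 0") (auto simp: power_0_left)
  have mq: "degree g = q"
  proof (rule ccontr)
    assume "degree g \<noteq> q"
    then have mlt: "degree g < q" using g(2) dp by simp
    define m where "m = degree g"
    have m0: "m > 0" using m_pos m_def by simp
    have oR: "\<omega> \<in> R" by (rule R_alpha)
    have "N \<omega> ^ q = N (\<omega> ^ q)" using N_power[OF oR] by simp
    also have "\<dots> = (\<omega> ^ q) ^ m" using N_const[OF thF] m_def by simp
    also have "\<dots> = (\<omega> ^ m) ^ q" by (rule pow_swap)
    finally have "N \<omega> ^ q = (\<omega> ^ m) ^ q" .
    then have "(N \<omega> / \<omega> ^ m) ^ q = 1" using o0 by (simp add: power_divide)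
    then obtain s where s: "N \<omega> / \<omega> ^ m = w ^ s" using roots_all[OF q wq w1] by blast
    then have "\<omega> ^ m = N \<omega> / w ^ s" using o0 w0 by (simp add: field_simps)
    then have omF: "\<omega> ^ m \<in> F" using N_K[OF oR] sf_divide[OF sf] sf_power[OF sf wF] by simp
    have "\<not> q dvd m" using m0 mlt m_def by (auto dest: dvd_imp_le)
    then have "coprime q m" using prime_imp_coprime[OF q] by blast
    then have "gcd m q = 1" by (metis coprime_iff_gcd_eq_1 gcd.commute)
    then obtain x y where xy: "m * x = q * y + 1" using bezout_nat[of m q] m0 by auto
    have "\<omega> ^ (m * x) = \<omega> ^ (q * y) * \<omega>" unfolding xy by simp
    then have "\<omega> = (\<omega> ^ m) ^ x / (\<omega> ^ q) ^ y" using o0 by (simp add: power_mult field_simps)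
    then have "\<omega> \<in> F" using omF thF by (metis sf_divide[OF sf] sf_power[OF sf])
    then show False using nF by simp
  qed
  have "g = p"
  proof (rule ccontr)
    assume ne: "g \<noteq> p"
    have Fd: "Fpoly F (g - p)" by (rule Fpoly_diff[OF sf Fg Fp])
    have "degree (g - p) < degree g"
    proof (rule degree_less_if_less_eqI)
      show "degree (g - p) \<le> degree g" using mq dp by (intro degree_diff_le) auto
      have "coeff p q = 1" unfolding p_def using q0 by (cases q) (simp_all add: coeff_pCons)
      then show "coeff (g - p) (degree g) = 0" using monic mq by simp
      show "g - p \<noteq> 0" using ne by simp
    qed
    moreover have "degree g \<le> degree (g - p)" using minimal[OF Fd] ne root pr by simp
    ultimately show False by simp
  qed
  then show ?thesis using g(1) unfolding p_def by simp
qed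

locale kummer = alg_ext F \<omega> g for F \<omega> g +
  fixes q :: nat and w :: complex
  assumes q: "prime q" and wq: "w ^ q = 1" and w1: "w \<noteq> 1" and wF: "w \<in> F"
    and gq: "g = monom 1 q - [:\<omega> ^ q:]" and iF: "q = 2 \<Longrightarrow> \<i> \<in> F" and om: "\<omega> \<in> mu"
begin

lemma q0: "q > 0" using q prime_gt_0_nat by blast
lemma dg: "degree g = q" using gq deg_Xq[OF q0] by simp
lemma o0: "\<omega> \<noteq> 0" using om by (rule mu_nz)
lemma w0: "w \<noteq> 0" using wq q0 by (cases "w = 0") (auto simp: power_0_left)
lemma thF: "\<omega> ^ q \<in> F"
proof -
  have "Fpoly F g" by (rule Fg)
  then have "coeff g 0 \<in> F" unfolding Fpoly_def by blast
  then have "- (\<omega> ^ q) \<in> F" using gq q0 by simp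
  then show ?thesis using sf_uminus[OF sf] by fastforce
qed

lemma sig_poly: assumes "Fpoly F p" "poly p \<omega> = 0" shows "poly p (w ^ j * \<omega>) = 0"
proof -
  obtain s r where sr: "Fpoly F s" "Fpoly F r" "p = g * s + r" "r = 0 \<or> degree r < degree g"
    using Fpoly_divmod[OF sf Fg g0 assms(1)] by blast
  have "poly r \<omega> = 0" using sr(3) assms(2) root by simp
  then have r0: "r = 0" using sr(4) rep_uniq[OF sr(2) Fpoly_0[OF sf], of] m_pos by auto
  have "(w ^ j * \<omega>) ^ q = (w ^ q) ^ j * \<omega> ^ q"
    by (simp only: power_mult_distrib pow_swap[of w j q])
  then have "poly g (w ^ j * \<omega>) = 0" using wq by (simp add: gq poly_monom)
  then show ?thesis using sr(3) r0 by simp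
qed

definition sig :: "nat \<Rightarrow> complex \<Rightarrow> complex" where
  "sig j x = poly (rep x) (w ^ j * \<omega>)"

lemma sig_eq: assumes "Fpoly F p" shows "sig j (poly p \<omega>) = poly p (w ^ j * \<omega>)"
proof -
  have x: "poly p \<omega> \<in> R" by (rule RI[OF assms])
  have "poly (p - rep (poly p \<omega>)) \<omega> = 0" using rep(3)[OF x] by simp
  from sig_poly[OF Fpoly_diff[OF sf assms rep(1)[OF x]] this, of j]
  show ?thesis unfolding sig_def by simp
qed

lemma R_rep: "x \<in> R \<Longrightarrow> x = poly (rep x) \<omega>" using rep(3) by simp

lemma sig_add: assumes "x \<in> R" "y \<in> R" shows "sig j (x + y) = sig j x + sig j y"
proof -
  have "x + y = poly (rep x + rep y) \<omega>" using R_rep assms by simp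
  then show ?thesis using sig_eq[OF Fpoly_add[OF sf rep(1)[OF assms(1)] rep(1)[OF assms(2)]], of j]
    by (simp add: sig_def)
qed

lemma sig_mult: assumes "x \<in> R" "y \<in> R" shows "sig j (x * y) = sig j x * sig j y"
proof -
  have "x * y = poly (rep x * rep y) \<omega>" using R_rep assms by (metis poly_mult)
  then show ?thesis using sig_eq[OF Fpoly_mult[OF sf rep(1)[OF assms(1)] rep(1)[OF assms(2)]], of j]
    by (simp add: sig_def)
qed

lemma sig_const: assumes "c \<in> F" shows "sig j c = c"
  using sig_eq[OF Fpoly_const[OF sf assms], of j] by simp

lemma sig_omega: "sig j \<omega> = w ^ j * \<omega>"
  using sig_eq[OF Fpoly_pCons[OF sf sf_0[OF sf] Fpoly_const[OF sf sf_1[OF sf]]], of j] by simp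

lemma sig_pc: assumes "x \<in> R" shows "sig k x = poly (pcompose (rep x) [:0, w ^ k:]) \<omega>"
  unfolding sig_def by (simp add: poly_pcompose mult.commute)

lemma Fpoly_lin: "Fpoly F [:0, w ^ k:]"
  by (intro Fpoly_pCons[OF sf] Fpoly_const[OF sf] sf_0[OF sf] sf_power[OF sf wF])

lemma sig_R: assumes "x \<in> R" shows "sig k x \<in> R"
  unfolding sig_pc[OF assms] by (intro RI Fpoly_pcompose[OF sf rep(1)[OF assms] Fpoly_lin])

lemma sig_comp: assumes "x \<in> R" shows "sig j (sig k x) = sig (j + k) x"
proof -
  have "sig j (sig k x) = poly (pcompose (rep x) [:0, w ^ k:]) (w ^ j * \<omega>)"
    unfolding sig_pc[OF assms] by (rule sig_eq[OF Fpoly_pcompose[OF sf rep(1)[OF assms] Fpoly_lin]])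
  also have "\<dots> = sig (j + k) x" unfolding sig_def by (simp add: poly_pcompose power_add algebra_simps)
  finally show ?thesis .
qed

lemma sig_0: assumes "x \<in> R" shows "sig 0 x = x"
  unfolding sig_def using R_rep[OF assms] by simp

lemma sig_q: assumes "x \<in> R" shows "sig q x = x"
  unfolding sig_def using R_rep[OF assms] wq by simp

lemma sig_power: assumes "x \<in> R" shows "sig j (x ^ n) = sig j x ^ n"
proof (induction n)
  case 0 then show ?case using sig_const[OF sf_1[OF sf]] by simp
next
  case (Suc n) then show ?case using sig_mult[OF assms R_power[OF assms]] by simp
qed

lemma sig_inverse: assumes "x \<in> R" "x \<noteq> 0" shows "sig j (inverse x) = inverse (sig j x)" "sig j x \<noteq> 0"
proof -
  have "sig j x * sig j (inverse x) = 1"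
    using sig_mult[OF assms(1) R_inverse[OF assms(1)]] sig_const[OF sf_1[OF sf]] assms(2) by simp
  then show "sig j (inverse x) = inverse (sig j x)" "sig j x \<noteq> 0"
    using inverse_unique[of "sig j x" "sig j (inverse x)"] by auto
qed

lemma sig_divide: assumes "x \<in> R" "y \<in> R" "y \<noteq> 0" shows "sig j (x / y) = sig j x / sig j y"
  using sig_mult[OF assms(1) R_inverse[OF assms(2)]] sig_inverse[OF assms(2,3)]
  by (simp add: divide_inverse)

lemma trace: assumes x: "x \<in> R" shows "(\<Sum>j<q. sig j x) = of_nat q * coeff (rep x) 0"
proof -
  let ?r = "rep x"
  have d: "degree ?r < q" using rep(2)[OF x] dg by simp
  have "(\<Sum>j<q. sig j x) = (\<Sum>j<q. \<Sum>i<q. coeff ?r i * (w ^ j * \<omega>) ^ i)"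
    unfolding sig_def using poly_lt_gen[OF d] by simp
  also have "\<dots> = (\<Sum>j<q. \<Sum>i<q. coeff ?r i * \<omega> ^ i * (w ^ i) ^ j)"
  proof -
    have pw: "(w ^ j * \<omega>) ^ i = \<omega> ^ i * (w ^ i) ^ j" for i j
      by (simp only: power_mult_distrib pow_swap[of w j i] mult.commute)
    show ?thesis by (simp only: pw) (simp add: mult_ac)
  qed
  also have "\<dots> = (\<Sum>i<q. coeff ?r i * \<omega> ^ i * (\<Sum>j<q. (w ^ i) ^ j))"
    by (subst sum.swap) (simp only: sum_distrib_left)
  also have "\<dots> = (\<Sum>i\<in>{0}. coeff ?r i * \<omega> ^ i * (\<Sum>j<q. (w ^ i) ^ j))"
  proof (rule sum.mono_neutral_right)
    show "\<forall>i\<in>{..<q} - {0}. coeff ?r i * \<omega> ^ i * (\<Sum>j<q. (w ^ i) ^ j) = 0"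
    proof
      fix i assume i: "i \<in> {..<q} - {0}"
      have "w ^ i \<noteq> 1" using i prim_pow_eq1[OF q wq w1, of i] by (auto dest: dvd_imp_le)
      moreover have "(w ^ i) ^ q = 1" by (simp only: pow_swap[of w i q] wq power_one)
      ultimately have "(\<Sum>j<q. (w ^ i) ^ j) = 0" by (simp add: geometric_sum)
      then show "coeff ?r i * \<omega> ^ i * (\<Sum>j<q. (w ^ i) ^ j) = 0" by simp
    qed
  qed (use q0 in auto)
  also have "\<dots> = of_nat q * coeff ?r 0" by simp
  finally show ?thesis .
qed

lemma fixed_F: assumes x: "x \<in> R" and fx: "sig 1 x = x" shows "x \<in> F"
proof -
  have all: "sig j x = x" for j
  proof (induction j)
    case 0 then show ?case by (rule sig_0[OF x])
  next
    case (Suc j)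
    have "sig (Suc j) x = sig j (sig 1 x)" using sig_comp[OF x, of j 1] by simp
    then show ?case using fx Suc by simp
  qed
  have "of_nat q * x = of_nat q * coeff (rep x) 0" using trace[OF x] all by simp
  then have "x = coeff (rep x) 0" using q0 by simp
  then show ?thesis using rep(1)[OF x] unfolding Fpoly_def by metis
qed

end

lemma qpart: "n > 0 \<Longrightarrow> prime (q::nat) \<Longrightarrow> \<exists>e n'. n = q ^ e * n' \<and> \<not> q dvd n'"
proof (induction n rule: less_induct)
  case (less n)
  show ?case
  proof (cases "q dvd n")
    case False then show ?thesis by (intro exI[of _ 0] exI[of _ n]) simp
  next
    case True
    then obtain k where k: "n = q * k" by blast
    have q2: "q \<ge> 2" using less.prems(2) by (rule prime_ge_2_nat)
    have k0: "k > 0" using k less.prems(1) by (cases k) auto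
    have "k < n" using k q2 k0 by simp
    from less.IH[OF this k0 less.prems(2)] obtain e n' where "k = q ^ e * n'" "\<not> q dvd n'" by blast
    then show ?thesis using k by (intro exI[of _ "Suc e"] exI[of _ n']) simp
  qed
qed

lemma sum_nat_lt: "2 * (\<Sum>j<n. j) = n * ((n::nat) - 1)"
proof (induction n)
  case 0 then show ?case by simp
next
  case (Suc n)
  have "2 * (\<Sum>j<Suc n. j) = n * (n - 1) + 2 * n" using Suc by simp
  also have "\<dots> = Suc n * (Suc n - 1)" by (cases n) (simp_all add: algebra_simps)
  finally show ?case .
qed

context kummer begin

lemma H1: assumes E: "E \<in> R" and EF: "E ^ q \<in> F" shows "\<exists>h\<in>F. \<exists>s. E = h * \<omega> ^ s"
proof (cases "E = 0")
  case True then show ?thesis using sf_0[OF sf] by (intro bexI[of _ 0] exI[of _ 0]) auto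
next
  case False
  have s1: "sig 1 E ^ q = E ^ q" using sig_power[OF E, of 1 q] sig_const[OF EF, of 1] by simp
  have "(sig 1 E / E) ^ q = 1" using s1 False by (simp add: power_divide)
  then obtain s where "sig 1 E / E = w ^ s" using roots_all[OF q wq w1] by blast
  then have sE: "sig 1 E = w ^ s * E" using False by (simp add: field_simps)
  define Y where "Y = E * \<omega> ^ ((q - 1) * s)"
  have YR: "Y \<in> R" unfolding Y_def by (intro R_mult E R_power R_alpha)
  have qs: "s + (q - 1) * s = q * s" using q0 by (cases q) auto
  have "sig 1 Y = sig 1 E * (sig 1 \<omega>) ^ ((q - 1) * s)"
    unfolding Y_def using sig_mult[OF E R_power[OF R_alpha]] sig_power[OF R_alpha] by simp
  also have "\<dots> = w ^ s * E * (w * \<omega>) ^ ((q - 1) * s)" using sE sig_omega[of 1] by simp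
  also have "\<dots> = w ^ (s + (q - 1) * s) * Y" unfolding Y_def by (simp add: power_mult_distrib power_add)
  also have "\<dots> = Y" unfolding qs by (simp add: power_mult wq)
  finally have "sig 1 Y = Y" .
  then have YF: "Y \<in> F" by (rule fixed_F[OF YR])
  have "Y * \<omega> ^ s = E * \<omega> ^ ((q - 1) * s + s)" unfolding Y_def by (simp add: power_add)
  also have "(q - 1) * s + s = q * s" using qs by simp
  finally have "Y * \<omega> ^ s = E * (\<omega> ^ q) ^ s" by (simp add: power_mult)
  then have "E = (Y / (\<omega> ^ q) ^ s) * \<omega> ^ s" using o0 by (simp add: field_simps)
  moreover have "Y / (\<omega> ^ q) ^ s \<in> F" by (rule sf_divide[OF sf YF sf_power[OF sf thF]])
  ultimately show ?thesis by blast
qed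

lemma H2: assumes E: "E \<in> R" "E \<noteq> 0" and f: "f \<in> F" and eq: "E ^ q = f * \<omega> ^ r" shows "q dvd r"
proof -
  have f0: "f \<noteq> 0" using eq E(2) by auto
  define \<nu> where "\<nu> = sig 1 E / E"
  have s1R: "sig 1 E \<in> R" by (rule sig_R[OF E(1)])
  have nR: "\<nu> \<in> R" unfolding \<nu>_def by (intro sf_divide[OF R_subfield] s1R E(1))
  have s10: "sig 1 E \<noteq> 0" by (rule sig_inverse(2)[OF E])
  have n0: "\<nu> \<noteq> 0" unfolding \<nu>_def using s10 E(2) by simp
  have "sig 1 (E ^ q) = sig 1 f * sig 1 (\<omega> ^ r)"
    unfolding eq by (rule sig_mult[OF R_K[OF f] R_power[OF R_alpha]])
  also have "\<dots> = f * (w * \<omega>) ^ r" using sig_const[OF f] sig_power[OF R_alpha] sig_omega[of 1] by simp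
  finally have sEq: "sig 1 E ^ q = f * (w * \<omega>) ^ r" using sig_power[OF E(1)] by simp
  have nq: "\<nu> ^ q = w ^ r"
    unfolding \<nu>_def power_divide sEq eq using f0 o0 by (simp add: power_mult_distrib)
  have wrF: "w ^ r \<in> F" by (rule sf_power[OF sf wF])
  have "sig 1 \<nu> ^ q = \<nu> ^ q" using sig_power[OF nR, of 1 q] nq sig_const[OF wrF] by simp
  then have "(sig 1 \<nu> / \<nu>) ^ q = 1" using n0 by (simp add: power_divide)
  then obtain s where "sig 1 \<nu> / \<nu> = w ^ s" using roots_all[OF q wq w1] by blast
  then have sn: "sig 1 \<nu> = w ^ s * \<nu>" using n0 by (simp add: field_simps)
  have wsF: "w ^ s \<in> F" by (rule sf_power[OF sf wF])
  have sj: "sig j \<nu> = w ^ (j * s) * \<nu>" for j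
  proof (induction j)
    case 0 then show ?case using sig_0[OF nR] by simp
  next
    case (Suc j)
    have "sig (Suc j) \<nu> = sig j (sig 1 \<nu>)" using sig_comp[OF nR, of j 1] by simp
    also have "\<dots> = sig j (w ^ s) * sig j \<nu>" unfolding sn by (rule sig_mult[OF R_K[OF wsF] nR])
    also have "\<dots> = w ^ s * (w ^ (j * s) * \<nu>)" using sig_const[OF wsF] Suc by simp
    finally show ?case by (simp add: power_add mult_ac)
  qed
  have tel: "(\<Prod>j<n. sig j \<nu>) = sig n E / E" for n
  proof (induction n)
    case 0 then show ?case using sig_0[OF E(1)] E(2) by simp
  next
    case (Suc n)
    have "sig n \<nu> = sig n (sig 1 E) / sig n E"
      unfolding \<nu>_def by (rule sig_divide[OF s1R E])
    also have "\<dots> = sig (Suc n) E / sig n E" using sig_comp[OF E(1), of n 1] by simp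
    finally have "sig n \<nu> = sig (Suc n) E / sig n E" .
    then show ?case using Suc sig_inverse(2)[OF E, of n] by simp
  qed
  have P1: "(\<Prod>j<q. sig j \<nu>) = 1" using tel[of q] sig_q[OF E(1)] E(2) by simp
  show "q dvd r"
  proof (cases "q = 2")
    case True
    have "(w - 1) * (w + 1) = 0" using wq True by (simp add: algebra_simps power2_eq_square)
    then have "w + 1 = 0" using w1 by auto
    then have wm: "w = -1" by (simp add: eq_neg_iff_add_eq_0)
    show ?thesis
    proof (rule ccontr)
      assume nd: "\<not> q dvd r"
      then have "odd r" using True by simp
      then have n2: "\<nu> ^ 2 = -1" using nq True wm by simp
      then have "(\<nu> - \<i>) * (\<nu> + \<i>) = 0" by (simp add: algebra_simps power2_eq_square)
      then have "\<nu> - \<i> = 0 \<or> \<nu> + \<i> = 0" by (simp only: mult_eq_0_iff)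
      then have "\<nu> = \<i> \<or> \<nu> = - \<i>" by (metis eq_neg_iff_add_eq_0 eq_iff_diff_eq_0)
      then have nF: "\<nu> \<in> F" using iF[OF True] sf_uminus[OF sf] by auto
      have "(\<Prod>j<q. sig j \<nu>) = \<nu> ^ 2" using sig_const[OF nF] True by (simp add: power2_eq_square)
      then show False using P1 n2 by simp
    qed
  next
    case False
    have q2: "q > 2" using False prime_ge_2_nat[OF q] by simp
    then have "odd q" using prime_odd_nat[OF q] by simp
    then obtain k where k: "q = 2 * k + 1" using oddE by blast
    have "2 * (\<Sum>j<q. j) = q * (2 * k)" using sum_nat_lt[of q] k by simp
    then have S: "(\<Sum>j<q. j) = q * k" by simp
    have "(\<Prod>j<q. sig j \<nu>) = (\<Prod>j<q. w ^ (j * s)) * (\<Prod>j<q. \<nu>)"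
      unfolding sj by (rule prod.distrib)
    also have "(\<Prod>j<q. w ^ (j * s)) = w ^ (\<Sum>j<q. j * s)" by (simp add: power_sum)
    also have "(\<Sum>j<q. j * s) = q * k * s" using S by (simp add: sum_distrib_right[symmetric])
    also have "w ^ (q * k * s) = 1" by (simp add: power_mult wq)
    finally have "\<nu> ^ q = 1" using P1 by simp
    then have "w ^ r = 1" using nq by simp
    then show ?thesis using prim_pow_eq1[OF q wq w1] by simp
  qed
qed

lemma homog: assumes "\<rho> \<in> R" "\<rho> ^ (q ^ e) = 1" shows "\<exists>h\<in>F. \<exists>s. \<rho> = h * \<omega> ^ s"
  using assms
proof (induction e arbitrary: \<rho>)
  case 0 then show ?case using sf_1[OF sf] by (intro bexI[of _ 1] exI[of _ 0]) auto
next
  case (Suc e)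
  have "(\<rho> ^ q) ^ (q ^ e) = 1" using Suc.prems(2) by (simp add: power_mult[symmetric])
  then obtain h s where hs: "h \<in> F" "\<rho> ^ q = h * \<omega> ^ s" using Suc.IH[OF R_power[OF Suc.prems(1)]] by blast
  have r0: "\<rho> \<noteq> 0" using Suc.prems(2) q0 by (cases "\<rho> = 0") (auto simp: power_0_left)
  have "q dvd s" by (rule H2[OF Suc.prems(1) r0 hs(1) hs(2)])
  then obtain s' where "s = q * s'" by blast
  then have "\<rho> ^ q = h * (\<omega> ^ q) ^ s'" using hs by (simp add: power_mult)
  then have "\<rho> ^ q \<in> F" using hs(1) thF by (simp add: sf_mult[OF sf] sf_power[OF sf])
  then show ?case by (rule H1[OF Suc.prems(1)])
qed

lemma no_root: assumes sa: "k_simple F q a" and c: "c \<in> R" and e: "\<eta> \<in> mu" and eq: "a = c ^ q * \<eta>"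
  shows False
proof -
  have aF: "a \<in> F" "a \<noteq> 0" using sa unfolding k_simple_def by auto
  have c0: "c \<noteq> 0" using eq aF(2) q0 by auto
  have "\<eta> = a / c ^ q" using eq c0 by simp
  then have eR: "\<eta> \<in> R" using aF(1) K_sub_R c by (metis sf_divide[OF R_subfield] R_power subsetD)
  have e0: "\<eta> \<noteq> 0" by (rule mu_nz[OF e])
  obtain n where n: "n > 0" "\<eta> ^ n = 1" using e by (rule mu_E)
  obtain e' n' where en: "n = q ^ e' * n'" "\<not> q dvd n'" using qpart[OF n(1) q] by blast
  have "coprime q n'" using prime_imp_coprime[OF q en(2)] .
  then have "gcd q n' = 1" by (metis coprime_iff_gcd_eq_1)
  then obtain x y where xy: "q * x = n' * y + 1" using bezout_nat[of q n'] q0 by auto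
  define \<xi> where "\<xi> = \<eta> ^ x"
  define \<eta>2 where "\<eta>2 = inverse (\<eta> ^ (n' * y))"
  have "\<xi> ^ q = \<eta> ^ (q * x)" unfolding \<xi>_def by (simp add: power_mult[symmetric] mult.commute)
  also have "\<dots> = \<eta> ^ (n' * y) * \<eta>" unfolding xy by simp
  finally have split: "\<eta> = \<xi> ^ q * \<eta>2" unfolding \<eta>2_def using e0 by (simp add: field_simps)
  have "\<eta>2 ^ (q ^ e') = inverse (\<eta> ^ (n' * y * q ^ e'))" unfolding \<eta>2_def
    by (simp add: power_inverse power_mult)
  also have "n' * y * q ^ e' = n * y" using en(1) by simp
  also have "\<eta> ^ (n * y) = 1" by (simp add: power_mult n(2))
  finally have e2pow: "\<eta>2 ^ (q ^ e') = 1" by simp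
  have e2R: "\<eta>2 \<in> R" unfolding \<eta>2_def by (intro R_inverse R_power eR)
  have e2mu: "\<eta>2 \<in> mu" unfolding \<eta>2_def by (intro mu_inverse mu_power e)
  have e20: "\<eta>2 \<noteq> 0" by (rule mu_nz[OF e2mu])
  obtain h s where hs: "h \<in> F" "\<eta>2 = h * \<omega> ^ s" using homog[OF e2R e2pow] by blast
  have h0: "h \<noteq> 0" using hs(2) e20 by auto
  define C where "C = c * \<xi>"
  have CR: "C \<in> R" unfolding C_def \<xi>_def by (intro R_mult c R_power eR)
  have C0: "C \<noteq> 0" unfolding C_def \<xi>_def using c0 e0 by simp
  have aC: "a = C ^ q * \<eta>2" using eq split unfolding C_def by (simp add: power_mult_distrib mult_ac)
  have oqs: "\<omega> ^ s * \<omega> ^ ((q - 1) * s) = (\<omega> ^ q) ^ s"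
  proof -
    have "s + (q - 1) * s = q * s" using q0 by (cases q) auto
    then show ?thesis by (metis power_add power_mult)
  qed
  have "C ^ q * (h * (\<omega> ^ q) ^ s) = a * \<omega> ^ ((q - 1) * s)"
    unfolding aC hs(2) oqs[symmetric] by (simp add: mult_ac)
  then have Cq: "C ^ q = (a / (h * (\<omega> ^ q) ^ s)) * \<omega> ^ ((q - 1) * s)"
    using h0 o0 by (simp add: field_simps)
  have fF: "a / (h * (\<omega> ^ q) ^ s) \<in> F"
    by (rule sf_divide[OF sf aF(1) sf_mult[OF sf hs(1) sf_power[OF sf thF]]])
  have "q dvd (q - 1) * s" by (rule H2[OF CR C0 fF Cq])
  moreover have "\<not> q dvd (q - 1)"
  proof
    assume "q dvd (q - 1)"
    moreover have "0 < q - 1" using prime_ge_2_nat[OF q] by simp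
    ultimately show False using q0 by (auto dest: dvd_imp_le)
  qed
  ultimately have "q dvd s" using prime_dvd_mult_iff[OF q] by blast
  then obtain s' where s': "s = q * s'" by blast
  have e2F: "\<eta>2 \<in> F" unfolding hs(2) s' using hs(1) thF
    by (simp add: power_mult sf_mult[OF sf] sf_power[OF sf])
  have "C ^ q = a / \<eta>2" using aC e20 by simp
  then have "C ^ q \<in> F" using aF(1) e2F by (simp add: sf_divide[OF sf])
  then obtain h' s2 where h': "h' \<in> F" "C = h' * \<omega> ^ s2" using H1[OF CR] by blast
  have "a = h' ^ q * ((\<omega> ^ s2) ^ q * \<eta>2)" unfolding aC h'(2) by (simp add: power_mult_distrib)
  moreover have "(\<omega> ^ s2) ^ q * \<eta>2 \<in> mu" by (intro mu_mult mu_power om e2mu)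
  ultimately show False using simple_no_root[OF sa q h'(1)] by blast
qed

end

lemma caseB:
  assumes sf: "is_subfield F" and q: "prime q" and wF: "w \<in> F" and wq: "w ^ q = 1" and w1: "w \<noteq> 1"
    and iF: "q = 2 \<Longrightarrow> \<i> \<in> F" and om: "\<omega> \<in> mu" and thF: "\<omega> ^ q \<in> F" and sa: "k_simple F q a"
  shows "k_simple (adjoin F {\<omega>}) q a"
proof (cases "\<omega> \<in> F")
  case True
  have "adjoin F {\<omega>} \<subseteq> F" using adjoin_least[OF sf] True by blast
  moreover have "a \<in> adjoin F {\<omega>}" using sa adjoin_sup1 unfolding k_simple_def by blast
  ultimately show ?thesis using simple_mono[OF sa] by blast
next
  case False
  have ka: "kummer F \<omega> (monom 1 q - [:\<omega> ^ q:]) q w"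
    by (intro kummer.intro kummer_setup[OF sf q wF wq w1 om thF False] kummer_axioms.intro)
      (use q wq w1 wF iF om in auto)
  interpret kummer F \<omega> "monom 1 q - [:\<omega> ^ q:]" q w by (rule ka)
  have aF: "a \<in> F" "a \<noteq> 0" "a \<notin> mu" using sa unfolding k_simple_def by auto
  show ?thesis
  proof (rule simple_intro[OF adjoin_subfield _ aF(2,3) q])
    show "a \<in> adjoin F {\<omega>}" using aF(1) adjoin_sup1 by blast
    fix c \<eta> assume "c \<in> adjoin F {\<omega>}" "\<eta> \<in> mu"
    then show "a \<noteq> c ^ q * \<eta>" using no_root[OF sa] adjoin_sub_R by blast
  qed
qed

theorem lemma2p10:
  fixes P :: "complex set" and q t :: nat and a \<zeta> :: complex
  assumes "is_subfield P"
    and "fin_gen_over_Q P"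
    and "\<i> \<in> P"
    and "prime q"
    and "k_simple P q a"
    and "t \<ge> 1"
    and "root_of_unity_of_order (q ^ t) \<zeta>"
  shows "k_simple (adjoin P {\<zeta>}) q a"
proof -
  note sf = assms(1) and iP = assms(3) and q = assms(4) and sa = assms(5) and t1 = assms(6)
  have q2: "q \<ge> 2" using q by (rule prime_ge_2_nat)
  have z: "\<zeta> ^ (q ^ t) = 1" "\<And>m. 0 < m \<Longrightarrow> m < q ^ t \<Longrightarrow> \<zeta> ^ m \<noteq> 1"
    using assms(7) unfolding root_of_unity_of_order_def by auto
  have zmu: "\<zeta> \<in> mu" using z(1) q2 by (intro mu_I[of "q ^ t"]) auto
  have aP: "a \<in> P" using sa unfolding k_simple_def by blast
  define w where "w = \<zeta> ^ (q ^ (t - 1))"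
  have qt: "q ^ t = q ^ (t - 1) * q" using t1 by (cases t) auto
  have wq: "w ^ q = 1" unfolding w_def using z(1) qt by (simp add: power_mult[symmetric])
  have w1: "w \<noteq> 1"
  proof
    assume "w = 1"
    moreover have "0 < q ^ (t - 1)" using q2 by simp
    moreover have "q ^ (t - 1) < q ^ t" using qt q2 by simp
    ultimately show False using z(2) unfolding w_def by blast
  qed
  define F0 where "F0 = adjoin P {w}"
  have sF0: "is_subfield F0" unfolding F0_def by (rule adjoin_subfield)
  have PF0: "P \<subseteq> F0" unfolding F0_def by (rule adjoin_sup1)
  have wF0: "w \<in> F0" unfolding F0_def using adjoin_sup2 by blast
  have s0: "k_simple F0 q a" unfolding F0_def by (rule caseA[OF sf q sa wq])
  have step: "e < t \<Longrightarrow> k_simple (adjoin F0 {\<zeta> ^ (q ^ (t - 1 - e))}) q a" for e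
  proof (induction e)
    case 0
    have "adjoin F0 {\<zeta> ^ (q ^ (t - 1))} \<subseteq> F0"
      using adjoin_least[OF sF0] wF0 unfolding w_def by simp
    moreover have "a \<in> adjoin F0 {\<zeta> ^ (q ^ (t - 1))}" using aP PF0 adjoin_sup1 by blast
    ultimately show ?case using simple_mono[OF s0] by simp
  next
    case (Suc e)
    then have et: "e < t" by simp
    define G where "G = adjoin F0 {\<zeta> ^ (q ^ (t - 1 - e))}"
    have sG: "k_simple G q a" unfolding G_def by (rule Suc.IH[OF et])
    define \<omega> where "\<omega> = \<zeta> ^ (q ^ (t - 1 - Suc e))"
    have ee: "t - 1 - e = Suc (t - 1 - Suc e)" using Suc.prems by simp
    have oq: "\<omega> ^ q = \<zeta> ^ (q ^ (t - 1 - e))"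
      unfolding \<omega>_def ee by (simp add: power_mult[symmetric] mult.commute)
    have sfG: "is_subfield G" unfolding G_def by (rule adjoin_subfield)
    have F0G: "F0 \<subseteq> G" unfolding G_def by (rule adjoin_sup1)
    have oqG: "\<omega> ^ q \<in> G" unfolding oq G_def using adjoin_sup2 by blast
    have omu: "\<omega> \<in> mu" unfolding \<omega>_def by (rule mu_power[OF zmu])
    have iG: "\<i> \<in> G" using iP PF0 F0G by blast
    have "k_simple (adjoin G {\<omega>}) q a"
      by (rule caseB[OF sfG q _ wq w1 _ omu oqG sG]) (use wF0 F0G iG in auto)
    moreover have "adjoin F0 {\<omega>} \<subseteq> adjoin G {\<omega>}"
      using adjoin_least[OF adjoin_subfield] F0G adjoin_sup1[of G "{\<omega>}"] adjoin_sup2[of "{\<omega>}" G]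
      by blast
    moreover have "a \<in> adjoin F0 {\<omega>}" using aP PF0 adjoin_sup1 by blast
    ultimately show ?case unfolding \<omega>_def using simple_mono by blast
  qed
  have "k_simple (adjoin F0 {\<zeta>}) q a" using step[of "t - 1"] t1 by simp
  moreover have "adjoin P {\<zeta>} \<subseteq> adjoin F0 {\<zeta>}"
    using adjoin_least[OF adjoin_subfield] PF0 adjoin_sup1[of F0 "{\<zeta>}"] adjoin_sup2[of "{\<zeta>}" F0]
    by blast
  moreover have "a \<in> adjoin P {\<zeta>}" using aP adjoin_sup1 by blast
  ultimately show ?thesis using simple_mono by blast
qed

end
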